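(* For every $k\in\mathbb{N}$ there is a constant $C_k>0$ (depending only on $k$ and $b$) such that for every integer $r\ge1$ and every $1\le i\le\lambda(r)$, \[\mathbb{E}\big(|X_i^{(r)}|^k\big)\le C_k.\]
   Context: Fix an integer $b\ge2$. $\mathbb{X}:=\{0,\dots,b-1\}^{\mathbb{N}}$ is the space of $b$-adic integers ($x_0$ the units digit) with addition with carries extending addition on $\mathbb{N}$ ($\mathbb{N}$ embedded via base-$b$ digits); $T(x):=x+1$; $\mathbb{P}$ is the normalized Haar measure (digits i.i.d. uniform), and $\mathbb{E}$ denotes expectation under $\mathbb{P}$. For $k\in\mathbb{N}$, $s_k(x):=x_0+\dots+x_k$, $\Delta_k^{(t)}(x):=s_k(x+t)-s_k(x)$, and $\Delta^{(t)}(x):=\lim_k\Delta_k^{(t)}(x)$, defined for all but finitely many $x$. Blocks: write the expansion of $r\ge1$ as the digit string $r_\ell\cdots r_0$, $r_\ell\ne0$; a block is a maximal run of consecutive $0$ digits, a maximal run of consecutive digits equal to $b-1$, or (when $b\ge3$) a single digit with value in $\{1,\dots,b-2\}$; non-zero blocks are those that are not runs of $0$'s, and $\lambda(r)$ is their number. Let $B_1,\dots,B_{\lambda(r)}$ be the non-zero blocks listed from the most significant end to the units digit. For $0\le i\le\lambda(r)$, $r[i]$ is the integer whose expansion is obtained from that of $r$ by replacing each block $B_k$ with $k>i$ by a run of $0$'s of the same length (so $r[0]=0$, $r[\lambda(r)]=r$). Define, $\mathbb{P}$-a.e., $X_i^{(r)}:=\Delta^{(r[i]-r[i-1])}\circ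 T^{r[i-1]}$ for $1\le i\le\lambda(r)$. *)

theory Defs
  imports "HOL-Probability.Probability"
begin

text \<open>b-adic integers: digit sequences x :: nat \<Rightarrow> nat with x j < b (x 0 = units digit).\<close>

text \<open>Normalized Haar measure: digits i.i.d. uniform on {0..b-1}.\<close>
definition haar :: "nat \<Rightarrow> (nat \<Rightarrow> nat) measure" where
  "haar b = PiM UNIV (\<lambda>_::nat. measure_pmf (pmf_of_set {..<b}))"

text \<open>Addition with carries of a natural number t to a b-adic integer x:
  digit k of x + t is digit k of (x_0 + ... + x_k b^k) + t.\<close>
definition badd :: "nat \<Rightarrow> (nat \<Rightarrow> nat) \<Rightarrow> nat \<Rightarrow> (nat \<Rightarrow> nat)" where
  "badd b x t = (\<lambda>k. ((\<Sum>j\<le>k. x j * b ^ j) + t) div b ^ k mod b)"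

definition Todo :: "nat \<Rightarrow> (nat \<Rightarrow> nat) \<Rightarrow> (nat \<Rightarrow> nat)" where
  "Todo b x = badd b x 1"

definition sk :: "nat \<Rightarrow> (nat \<Rightarrow> nat) \<Rightarrow> int" where
  "sk k x = (\<Sum>j\<le>k. int (x j))"

definition DeltaK :: "nat \<Rightarrow> nat \<Rightarrow> nat \<Rightarrow> (nat \<Rightarrow> nat) \<Rightarrow> int" where
  "DeltaK b t k x = sk k (badd b x t) - sk k x"

text \<open>Limit of DeltaK as k \<rightarrow> \<infinity>; set to 0 on the (null) set where the limit does not exist.\<close>
definition Delta :: "nat \<Rightarrow> nat \<Rightarrow> (nat \<Rightarrow> nat) \<Rightarrow> real" where
  "Delta b t x = (if convergent (\<lambda>k. real_of_int (DeltaK b t k x))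
                  then lim (\<lambda>k. real_of_int (DeltaK b t k x)) else 0)"

definition dig :: "nat \<Rightarrow> nat \<Rightarrow> nat \<Rightarrow> nat" where
  "dig b r j = r div b ^ j mod b"

text \<open>Number of digits (\<ell>+1 for r \<ge> 1).\<close>
definition ndigits :: "nat \<Rightarrow> nat \<Rightarrow> nat" where
  "ndigits b r = (LEAST n. r < b ^ n)"

text \<open>Positions j \<le> j' lie in the same block: all digits in between are equal, and either
  j = j' or the common digit is 0 or b-1 (digits in {1..b-2} form singleton blocks).\<close>
definition same_block :: "nat \<Rightarrow> nat \<Rightarrow> nat \<Rightarrow> nat \<Rightarrow> bool" where
  "same_block b r j j' \<longleftrightarrow> j \<le> j' \<and> (\<forall>m\<in>{j..j'}. dig b r m = dig b r j) \<and>
     (j = j' \<or> dig b r j = 0 \<or> dig b r j = b - 1)"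

definition nz_block_lows :: "nat \<Rightarrow> nat \<Rightarrow> nat set" where
  "nz_block_lows b r = {j. j < ndigits b r \<and> dig b r j \<noteq> 0 \<and>
                          (j = 0 \<or> \<not> same_block b r (j - 1) j)}"

definition lam :: "nat \<Rightarrow> nat \<Rightarrow> nat" where
  "lam b r = card (nz_block_lows b r)"

text \<open>Lowest position of block B_k (k = 1..lam), blocks listed from the most significant end.\<close>
definition block_low :: "nat \<Rightarrow> nat \<Rightarrow> nat \<Rightarrow> nat" where
  "block_low b r k = rev (sorted_list_of_set (nz_block_lows b r)) ! (k - 1)"

text \<open>r[i]: replace every block B_k with k > i by zeros.\<close>
definition rtrunc :: "nat \<Rightarrow> nat \<Rightarrow> nat \<Rightarrow> nat" where
  "rtrunc b r i = (\<Sum>j<ndigits b r.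
      (if \<exists>k. i < k \<and> k \<le> lam b r \<and> same_block b r (block_low b r k) j then 0 else dig b r j)
      * b ^ j)"

definition Xr :: "nat \<Rightarrow> nat \<Rightarrow> nat \<Rightarrow> (nat \<Rightarrow> nat) \<Rightarrow> real" where
  "Xr b r i x = Delta b (rtrunc b r i - rtrunc b r (i - 1)) ((Todo b ^^ rtrunc b r (i - 1)) x)"

end

theory Submission
  imports Defs "HOL-Real_Asymp.Real_Asymp"
begin

definition Xs :: "nat \<Rightarrow> (nat \<Rightarrow> nat) \<Rightarrow> nat \<Rightarrow> nat" where
  "Xs b x j = (\<Sum>i\<le>j. x i * b ^ i)"

context fixes b :: nat assumes b2: "2 \<le> b" begin

lemma bpos: "0 < b" using b2 by simp

lemma dm_add_dvd:
  assumes "b ^ (j+1) dvd q" shows "(a + q) div b ^ j mod b = a div b ^ j mod b"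
proof -
  obtain c where q: "q = b^(j+1) * c" using assms by blast
  have "(a + q) = a + b^j * (b*c)" by (simp add: q power_add mult.assoc)
  hence "(a + q) div b^j = a div b^j + b*c" using bpos by simp
  thus ?thesis by simp
qed

lemma Xs_Suc: "Xs b x (Suc j) = Xs b x j + x (Suc j) * b ^ Suc j"
  by (simp add: Xs_def)

lemma Xs_split: "i \<le> k \<Longrightarrow> \<exists>c. Xs b x k = Xs b x i + b^(i+1) * c"
proof (induction k)
  case 0 thus ?case by auto
next
  case (Suc k)
  show ?case
  proof (cases "i = Suc k")
    case True thus ?thesis by (intro exI[of _ 0]) simp
  next
    case False
    with Suc obtain c where c: "Xs b x k = Xs b x i + b^(i+1) * c" by auto
    from False Suc have "i + 1 \<le> Suc k" by simp
    then obtain e where e: "Suc k = (i+1) + e" using le_Suc_ex by blast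
    have ke: "k = e + i" using e by simp
    have pe: "b^Suc k = b^(i+1) * b^e" by (simp add: ke power_add)
    have "Xs b x (Suc k) = Xs b x k + x (Suc k) * b^Suc k" by (rule Xs_Suc)
    also have "\<dots> = Xs b x i + b^(i+1) * (c + x (Suc k) * b^e)"
      unfolding c pe by (simp add: algebra_simps)
    finally have "Xs b x (Suc k) = Xs b x i + b^(i+1) * (c + x (Suc k) * b^e)" .
    thus ?thesis by blast
  qed
qed

lemma badd_eq: "i \<le> k \<Longrightarrow> badd b x u i = (Xs b x k + u) div b ^ i mod b"
proof -
  assume "i \<le> k"
  then obtain c where c: "Xs b x k = Xs b x i + b^(i+1) * c" using Xs_split by blast
  have "(Xs b x k + u) div b ^ i mod b = (Xs b x i + u + b^(i+1)*c) div b ^ i mod b"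
    by (simp add: c algebra_simps)
  also have "\<dots> = (Xs b x i + u) div b ^ i mod b" by (rule dm_add_dvd) simp
  finally show ?thesis by (simp add: badd_def Xs_def)
qed

lemma digits_sum: "(\<Sum>j<n. (N div b^j mod b) * b^j) = N mod b^n"
proof (induction n)
  case 0 thus ?case by simp
next
  case (Suc n)
  have "N mod b ^ Suc n = b^n * (N div b^n mod b) + N mod b^n"
    by (metis power_Suc2 mod_mult2_eq)
  thus ?case using Suc by (simp add: algebra_simps)
qed

lemma Xs_lt: "(\<And>j. x j < b) \<Longrightarrow> Xs b x j < b ^ (j+1)"
proof (induction j)
  case 0 thus ?case by (simp add: Xs_def)
next
  case (Suc j)
  have "x (Suc j) \<le> b - 1" using Suc.prems[of "Suc j"] by simp
  hence h1: "x (Suc j) * b ^ Suc j \<le> (b-1) * b^Suc j" by (rule mult_right_mono) simp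
  have h3: "Xs b x j < b^Suc j" using Suc by simp
  have h2: "(b-1)*b^Suc j + b^Suc j = b^(Suc j + 1)" using bpos by (cases b) auto
  show ?case unfolding Xs_Suc using h1 h2 h3 by linarith
qed

lemma Xs_digit: assumes "\<And>j. x j < b" shows "Xs b x j div b ^ j mod b = x j"
proof (cases j)
  case 0 thus ?thesis using assms by (simp add: Xs_def)
next
  case (Suc i)
  have lt: "Xs b x i < b ^ j" using Xs_lt[of x i, OF assms] Suc by simp
  have "Xs b x j = Xs b x i + x j * b^j" using Suc by (simp add: Xs_Suc)
  hence "Xs b x j div b^j = x j" using lt bpos by simp
  thus ?thesis using assms by simp
qed

lemma badd_0: assumes "\<And>j. x j < b" shows "badd b x 0 = x"
proof
  fix j show "badd b x 0 j = x j" using Xs_digit[of x j, OF assms] by (simp add: badd_def Xs_def)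
qed

lemma badd_badd: "badd b (badd b x u) v = badd b x (u+v)"
proof
  fix j
  have "Xs b (badd b x u) j = (\<Sum>i\<le>j. badd b x u i * b^i)" by (simp add: Xs_def)
  also have "\<dots> = (\<Sum>i\<le>j. ((Xs b x j + u) div b^i mod b) * b^i)"
    by (intro sum.cong refl) (simp add: badd_eq)
  also have "\<dots> = (\<Sum>i<Suc j. ((Xs b x j + u) div b^i mod b) * b^i)"
    by (simp only: lessThan_Suc_atMost)
  also have "\<dots> = (Xs b x j + u) mod b^(j+1)" by (simp add: digits_sum)
  finally have e: "Xs b (badd b x u) j = (Xs b x j + u) mod b^(j+1)" .
  have "badd b (badd b x u) v j = ((Xs b x j + u) mod b^(j+1) + v) div b^j mod b"
    using badd_eq[of j j "badd b x u" v] e by simp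
  also have "\<dots> = ((Xs b x j + u) mod b^(j+1) + v + b^(j+1) * ((Xs b x j + u) div b^(j+1))) div b^j mod b"
    by (rule dm_add_dvd[symmetric]) simp
  also have "\<dots> = (Xs b x j + (u + v)) div b^j mod b"
    by (metis add.assoc add.commute mod_mult_div_eq)
  also have "\<dots> = badd b x (u+v) j" using badd_eq[of j j x "u+v"] by simp
  finally show "badd b (badd b x u) v j = badd b x (u+v) j" .
qed

lemma Todo_pow: "(\<And>j. x j < b) \<Longrightarrow> (Todo b ^^ n) x = badd b x n"
proof (induction n)
  case 0 thus ?case by (simp add: badd_0)
next
  case (Suc n) thus ?case by (simp add: Todo_def badd_badd)
qed

lemma badd_lt: "badd b x u j < b" using bpos by (simp add: badd_def)

end

context fixes b :: nat assumes b2: "2 \<le> b" begin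

lemma geo_sum: "(\<Sum>l<j. (b-1) * b^l) + 1 = b^j"
proof (induction j)
  case 0 thus ?case by simp
next
  case (Suc j)
  have "(b-1)*b^j + b^j = b^Suc j" using b2 by (cases b) auto
  thus ?case using Suc by simp
qed

lemma digit_sum_gap:
  assumes c: "\<And>l. l < j \<Longrightarrow> c l < b" and ij: "i < j" and ci: "c i \<noteq> b - 1"
  shows "(\<Sum>l<j. c l * b^l) + b^i < b^j"
proof -
  have e1: "\<And>l. (c l + (if l = i then 1 else 0)) * b^l = c l * b^l + (if l = i then b^l else 0)"
    by simp
  have "(\<Sum>l<j. (c l + (if l = i then 1 else 0)) * b^l) = (\<Sum>l<j. c l * b^l) + (\<Sum>l<j. (if l = i then b^l else 0))"
    unfolding e1 by (rule sum.distrib)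
  also have "(\<Sum>l<j. (if l = i then b^l else 0)) = b^i" using ij by (simp add: sum.delta)
  finally have "(\<Sum>l<j. c l * b^l) + b^i = (\<Sum>l<j. (c l + (if l = i then 1 else 0)) * b^l)" by simp
  also have "\<dots> \<le> (\<Sum>l<j. (b-1) * b^l)"
  proof (rule sum_mono)
    fix l assume "l \<in> {..<j}"
    hence "c l < b" using c by simp
    hence "c l + (if l = i then 1 else 0) \<le> b - 1" using ci by auto
    thus "(c l + (if l = i then 1 else 0)) * b ^ l \<le> (b - 1) * b ^ l" by (rule mult_right_mono) simp
  qed
  also have "\<dots> < b^j" using geo_sum[of j] by simp
  finally show ?thesis .
qed

lemma Xs_mono: "i \<le> k \<Longrightarrow> Xs b x i \<le> Xs b x k"
  using Xs_split[OF b2, of i k x] by auto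

lemma Xs_ge: "x i * b^i \<le> Xs b x i"
  unfolding Xs_def by (rule member_le_sum) auto

lemma digits_a:
  assumes "b^m dvd t" "j < m"
  shows "badd b x (s+t) j = badd b x s j"
proof -
  have "b^(j+1) dvd b^m" by (rule le_imp_power_dvd) (use assms in simp)
  hence "b^(j+1) dvd t" using assms(1) by (rule dvd_trans)
  hence "(Xs b x j + s + t) div b^j mod b = (Xs b x j + s) div b^j mod b"
    by (rule dm_add_dvd[OF b2])
  thus ?thesis using badd_eq[OF b2, of j j] by (simp add: add.assoc)
qed

lemma digits_b:
  assumes x: "\<And>j. x j < b" and tM: "t < b^M" and Mi: "M \<le> i" and ij: "i < j"
    and yi: "badd b x s i \<noteq> b - 1"
  shows "badd b x (s+t) j = badd b x s j"
proof -
  obtain j' where j: "j = Suc j'" using ij by (cases j) auto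
  define W where "W = Xs b x j' + s"
  have yl: "badd b x s l = W div b^l mod b" if "l < j" for l
    using badd_eq[OF b2, of l j'] that j by (simp add: W_def)
  have "W mod b^j = (\<Sum>l<j. badd b x s l * b^l)"
    using digits_sum[OF b2, of W j] yl by simp
  moreover have "(\<Sum>l<j. badd b x s l * b^l) + b^i < b^j"
    by (rule digit_sum_gap) (use yi ij badd_lt[OF b2] in auto)
  moreover have "b^M \<le> b^i" by (rule power_increasing) (use Mi b2 in auto)
  hence "t < b^i" using tM by simp
  ultimately have lt: "W mod b^j + t < b^j" by linarith
  have "(W + t) div b^j = W div b^j"
  proof -
    have eq: "W + t = (W mod b^j + t) + (W div b^j) * b^j" using mod_div_mult_eq[of W "b^j"] by simp
    have "(W + t) div b^j = (W mod b^j + t) div b^j + W div b^j"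
      by (subst eq) (simp add: bpos[OF b2])
    thus ?thesis using lt by simp
  qed
  have XS: "Xs b x j = Xs b x j' + x j * b^j" using Xs_Suc[OF b2, of x j'] j by simp
  have "badd b x (s+t) j = (W + t + x j * b^j) div b^j mod b"
    using badd_eq[OF b2, of j j x "s+t"] XS by (simp add: W_def algebra_simps)
  also have "\<dots> = ((W + t) div b^j + x j) mod b" using b2 by (simp add: add.commute)
  also have "\<dots> = (W div b^j + x j) mod b" using \<open>(W + t) div b^j = W div b^j\<close> by simp
  also have "\<dots> = (W + x j * b^j) div b^j mod b" using b2 by (simp add: add.commute)
  also have "\<dots> = badd b x s j"
    using badd_eq[OF b2, of j j x "s"] XS by (simp add: W_def algebra_simps)
  finally show ?thesis .
qed

end

context fixes b :: nat assumes b2: "2 \<le> b" begin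

lemma digits_c:
  assumes x: "\<And>j. x j < b" and hs: "b^M dvd s" and mM: "m < M"
    and blk: "M = Suc m \<or> t + b^m = b^M"
  shows "\<exists>Z. (\<forall>i<Z. x (m+i) = 0) \<and> (\<forall>j. m+Z < j \<longrightarrow> j < M \<longrightarrow> badd b x (s+t) j = badd b x s j)"
proof (cases "M = Suc m")
  case True thus ?thesis by (intro exI[of _ 0]) auto
next
  case False
  hence tb: "t + b^m = b^M" using blk by simp
  define Z where "Z = (LEAST Z. Z = M - m \<or> x (m+Z) \<noteq> 0)"
  have ZP: "Z = M - m \<or> x (m+Z) \<noteq> 0" unfolding Z_def by (rule LeastI[of _ "M-m"]) simp
  have Zle: "Z \<le> M - m" unfolding Z_def by (rule Least_le) simp
  have z0: "\<forall>i<Z. x (m+i) = 0"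
  proof (intro allI impI)
    fix i assume "i < Z"
    hence "\<not> (i = M - m \<or> x (m+i) \<noteq> 0)" unfolding Z_def by (rule not_less_Least)
    thus "x (m+i) = 0" by simp
  qed
  have main: "badd b x (s+t) j = badd b x s j" if j1: "m+Z < j" and j2: "j < M" for j
  proof -
    have "Z \<noteq> M - m" using j1 j2 by simp
    hence xZ: "x (m+Z) \<noteq> 0" using ZP by simp
    obtain j' where j: "j = Suc j'" using j1 by (cases j) auto
    have dj: "b^(j+1) dvd b^M" by (rule le_imp_power_dvd) (use j2 in simp)
    have ys: "badd b x s j = x j"
    proof -
      have "badd b x s j = (Xs b x j + s) div b^j mod b" using badd_eq[OF b2, of j j x s] by simp
      also have "\<dots> = Xs b x j div b^j mod b" by (rule dm_add_dvd[OF b2]) (rule dvd_trans[OF dj hs])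
      also have "\<dots> = x j" by (rule Xs_digit[OF b2 x])
      finally show ?thesis .
    qed
    have "b^m \<le> b^(m+Z)" by (rule power_increasing) (use b2 in auto)
    also have "\<dots> \<le> x (m+Z) * b^(m+Z)" using xZ by simp
    also have "\<dots> \<le> Xs b x (m+Z)" by (rule Xs_ge[OF b2])
    also have "\<dots> \<le> Xs b x j'" by (rule Xs_mono[OF b2]) (use j j1 in simp)
    finally have ge: "b^m \<le> Xs b x j'" .
    have lt: "Xs b x j' < b^j" using Xs_lt[OF b2, of x j'] x j by simp
    have XS: "Xs b x j = Xs b x j' + x j * b^j" using Xs_Suc[OF b2, of x j'] j by simp
    have eq: "Xs b x j + (s + t) = (Xs b x j' - b^m + x j * b^j) + (s + b^M)"
      using XS ge tb by simp
    have d2: "b^(j+1) dvd (s + b^M)" by (rule dvd_add[OF dvd_trans[OF dj hs] dj])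
    have "badd b x (s+t) j = (Xs b x j + (s+t)) div b^j mod b" using badd_eq[OF b2, of j j x "s+t"] by simp
    also have "\<dots> = (Xs b x j' - b^m + x j * b^j) div b^j mod b"
      unfolding eq by (rule dm_add_dvd[OF b2 d2])
    also have "\<dots> = ((Xs b x j' - b^m) div b^j + x j) mod b" using b2 by (simp add: add.commute)
    also have "(Xs b x j' - b^m) div b^j = 0" using lt by simp
    also have "(0 + x j) mod b = x j" using x[of j] by simp
    finally show ?thesis using ys by simp
  qed
  show ?thesis using z0 main by blast
qed

end

context fixes b :: nat assumes b2: "2 \<le> b" begin

lemma DeltaK_eq: "DeltaK b t k (badd b x s) = (\<Sum>j\<le>k. int (badd b x (s+t) j) - int (badd b x s j))"
  unfolding DeltaK_def sk_def badd_badd[OF b2] by (simp add: sum_subtractf)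

lemma pointwise:
  assumes x: "\<And>j. x j < b" and hs: "b^M dvd s" and mM: "m < M"
    and blk: "M = Suc m \<or> t + b^m = b^M" and tdvd: "b^m dvd t" and tlt: "t < b^M"
  shows "\<exists>Z. (\<forall>i<Z. x (m+i) = 0) \<and> (\<forall>R. (\<forall>i<R. badd b x s (M+i) = b-1) \<longrightarrow> badd b x s (M+R) \<noteq> b-1
      \<longrightarrow> \<bar>Delta b t (badd b x s)\<bar> \<le> real ((b-1)*(Z+R+2)))"
proof -
  obtain Z where ZZ: "(\<forall>i<Z. x (m+i) = 0) \<and> (\<forall>j. m+Z < j \<longrightarrow> j < M \<longrightarrow> badd b x (s+t) j = badd b x s j)"
    using digits_c[OF b2 x hs mM blk] ..
  note Z0 = conjunct1[OF ZZ] and Zc = conjunct2[OF ZZ]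
  have "\<bar>Delta b t (badd b x s)\<bar> \<le> real ((b-1)*(Z+R+2))"
    if R1: "\<forall>i<R. badd b x s (M+i) = b-1" and R2: "badd b x s (M+R) \<noteq> b-1" for R
  proof -
    define y where "y = badd b x s"
    define z where "z = badd b x (s+t)"
    define K where "K = M + R"
    define D where "D = (\<lambda>k. DeltaK b t k y)"
    have Dk: "D k = (\<Sum>j\<le>k. int (z j) - int (y j))" for k
      unfolding D_def y_def z_def by (rule DeltaK_eq)
    have const: "D k = D K" if "K \<le> k" for k
      using that
    proof (induction k rule: dec_induct)
      case base thus ?case by simp
    next
      case (step k)
      have "z (Suc k) = y (Suc k)" unfolding z_def y_def
        by (rule digits_b[OF b2 x tlt, of "M+R"]) (use step R2 in \<open>auto simp: K_def\<close>)
      thus ?case using step by (simp add: Dk)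
    qed
    have ev: "eventually (\<lambda>k. real_of_int (D k) = real_of_int (D K)) sequentially"
      unfolding eventually_sequentially
    proof (intro exI[of _ K] allI impI)
      fix n assume "K \<le> n"
      from const[OF this] show "real_of_int (D n) = real_of_int (D K)" by (rule arg_cong)
    qed
    have lim: "(\<lambda>k. real_of_int (D k)) \<longlonglongrightarrow> real_of_int (D K)"
      by (rule tendsto_eventually[OF ev])
    have conv: "convergent (\<lambda>k. real_of_int (D k))" using lim by (rule convergentI)
    have lim2: "lim (\<lambda>k. real_of_int (D k)) = real_of_int (D K)" using lim by (rule limI)
    have Deq: "Delta b t y = real_of_int (D K)"
      using conv lim2 unfolding Delta_def D_def by simp
    define S where "S = {m..m+Z} \<union> {M..K}"
    have fin: "finite S" unfolding S_def by simp
    have cS: "card S \<le> Z + R + 2"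
    proof -
      have "card S \<le> card {m..m+Z} + card {M..K}" unfolding S_def by (rule card_Un_le)
      thus ?thesis by (simp add: K_def)
    qed
    define f where "f j = (if j \<in> S then int (b-1) else 0)" for j
    have pw: "\<bar>int (z j) - int (y j)\<bar> \<le> f j" if "j \<le> K" for j
    proof (cases "j \<in> S")
      case True
      have "z j < b" "y j < b" unfolding z_def y_def by (rule badd_lt[OF b2])+
      thus ?thesis using True by (auto simp: f_def)
    next
      case False
      have "z j = y j"
      proof (cases "j < m")
        case True thus ?thesis unfolding z_def y_def by (rule digits_a[OF b2 tdvd])
      next
        case False
        with \<open>j \<notin> S\<close> that have "m + Z < j" "j < M" by (auto simp: S_def)
        thus ?thesis using Zc by (simp add: z_def y_def)
      qed
      thus ?thesis using False by (simp add: f_def)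
    qed
    have "\<bar>D K\<bar> \<le> (\<Sum>j\<le>K. \<bar>int (z j) - int (y j)\<bar>)" unfolding Dk by (rule sum_abs)
    also have "\<dots> \<le> (\<Sum>j\<le>K. f j)" by (rule sum_mono) (use pw in auto)
    also have "\<dots> = (\<Sum>j\<in>{j\<in>{..K}. j \<in> S}. int (b-1))"
      unfolding f_def by (rule sum.inter_filter[symmetric]) simp
    also have "\<dots> = int (b-1) * int (card {j\<in>{..K}. j \<in> S})" by simp
    also have "\<dots> \<le> int (b-1) * int (card S)"
    proof -
      have "card {j\<in>{..K}. j \<in> S} \<le> card S" by (rule card_mono[OF fin]) auto
      thus ?thesis by (intro mult_left_mono) auto
    qed
    also have "\<dots> \<le> int (b-1) * int (Z+R+2)"
      by (rule mult_left_mono) (use cS in auto)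
    finally have "\<bar>D K\<bar> \<le> int (b-1) * int (Z+R+2)" .
    hence "\<bar>D K\<bar> \<le> int ((b-1) * (Z+R+2))" by (simp only: of_nat_mult)
    hence "\<bar>real_of_int (D K)\<bar> \<le> real ((b-1) * (Z+R+2))" by linarith
    thus ?thesis using Deq y_def by simp
  qed
  thus ?thesis using Z0 by blast
qed

end

context fixes b :: nat assumes b2: "2 \<le> b" begin

lemma nd_lt: "r < b ^ ndigits b r"
proof -
  have "r < 2 ^ r" by (rule less_exp)
  also have "(2::nat) ^ r \<le> b ^ r" by (rule power_mono) (use b2 in auto)
  finally have "r < b ^ r" .
  thus ?thesis unfolding ndigits_def by (rule LeastI)
qed

lemma dig_high: "ndigits b r \<le> j \<Longrightarrow> dig b r j = 0"
proof -
  assume "ndigits b r \<le> j"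
  hence "b ^ ndigits b r \<le> b ^ j" by (rule power_increasing) (use b2 in simp)
  hence "r < b^j" using nd_lt[of r] by simp
  thus ?thesis by (simp add: dig_def)
qed

lemma dig_lt: "dig b r j < b" using b2 by (simp add: dig_def)

lemma lows_fin: "finite (nz_block_lows b r)"
  by (rule finite_subset[of _ "{..<ndigits b r}"]) (auto simp: nz_block_lows_def)

definition lst :: "nat \<Rightarrow> nat list" where "lst r = rev (sorted_list_of_set (nz_block_lows b r))"

lemma lst_props: "set (lst r) = nz_block_lows b r" "length (lst r) = lam b r"
    "sorted_wrt (>) (lst r)"
  using lows_fin[of r] by (auto simp: lst_def lam_def sorted_wrt_rev)

lemma low_in: "1 \<le> k \<Longrightarrow> k \<le> lam b r \<Longrightarrow> block_low b r k \<in> nz_block_lows b r"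
proof -
  assume a: "1 \<le> k" "k \<le> lam b r"
  have "k - 1 < length (lst r)" using a lst_props(2)[of r] by simp
  hence "lst r ! (k-1) \<in> set (lst r)" by (rule nth_mem)
  thus ?thesis unfolding block_low_def lst_def[symmetric] using lst_props(1) by simp
qed

lemma low_strict: "1 \<le> k1 \<Longrightarrow> k1 < k2 \<Longrightarrow> k2 \<le> lam b r \<Longrightarrow> block_low b r k2 < block_low b r k1"
proof -
  assume a: "1 \<le> k1" "k1 < k2" "k2 \<le> lam b r"
  have "(lst r ! (k1-1)) > (lst r ! (k2-1))"
    by (rule sorted_wrt_nth_less[OF lst_props(3)]) (use a lst_props(2) in auto)
  thus ?thesis unfolding block_low_def lst_def[symmetric] .
qed

lemma low_surj: "l \<in> nz_block_lows b r \<Longrightarrow> \<exists>k. 1 \<le> k \<and> k \<le> lam b r \<and> block_low b r k = l"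
proof -
  assume "l \<in> nz_block_lows b r"
  hence "l \<in> set (lst r)" using lst_props by simp
  then obtain n where n: "n < length (lst r)" "lst r ! n = l" by (auto simp: in_set_conv_nth)
  show ?thesis
    by (rule exI[of _ "Suc n"]) (use n lst_props(2) in \<open>simp add: block_low_def lst_def[symmetric]\<close>)
qed

lemma low_order: "1 \<le> k \<Longrightarrow> k \<le> lam b r \<Longrightarrow> 1 \<le> i \<Longrightarrow> i \<le> lam b r \<Longrightarrow>
   block_low b r k < block_low b r i \<Longrightarrow> i < k"
proof (rule ccontr)
  assume a: "1 \<le> k" "k \<le> lam b r" "1 \<le> i" "i \<le> lam b r" "block_low b r k < block_low b r i" "\<not> i < k"
  show False
  proof (cases "k = i")
    case True thus False using a by simp
  next
    case False
    hence "k < i" using a by simp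
    hence "block_low b r i < block_low b r k" using low_strict a by blast
    thus False using a by simp
  qed
qed

end

context fixes b :: nat assumes b2: "2 \<le> b" begin

lemma geo2: "m \<le> M \<Longrightarrow> (\<Sum>j\<in>{m..<M}. (b-1) * b^j) + b^m = b^M"
proof (induction M rule: dec_induct)
  case base thus ?case by simp
next
  case (step M)
  have "(b-1)*b^M + b^M = b^Suc M" using b2 by (cases b) auto
  thus ?case using step by simp
qed

lemma sb_refl: "same_block b r j j" by (simp add: same_block_def)

lemma block_struct:
  assumes i1: "1 \<le> i" and il: "i \<le> lam b r"
  shows "\<exists>m M. m < M \<and> b^M dvd rtrunc b r (i-1) \<and> b^m dvd (rtrunc b r i - rtrunc b r (i-1))
     \<and> rtrunc b r i - rtrunc b r (i-1) < b^M
     \<and> (M = Suc m \<or> (rtrunc b r i - rtrunc b r (i-1)) + b^m = b^M)"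
proof -
  define nd where "nd = ndigits b r"
  define m where "m = block_low b r i"
  define P where "P k j = (\<exists>k'. k < k' \<and> k' \<le> lam b r \<and> same_block b r (block_low b r k') j)" for k j
  define Bi where "Bi j = same_block b r m j" for j
  have mL: "m \<in> nz_block_lows b r" unfolding m_def by (rule low_in[OF b2 i1 il])
  hence dm0: "dig b r m \<noteq> 0" and mnd: "m < nd" and mlow: "m = 0 \<or> \<not> same_block b r (m-1) m"
    by (auto simp: nz_block_lows_def nd_def)
  have F5: "\<not> (P i j \<and> Bi j)" for j
  proof
    assume "P i j \<and> Bi j"
    then obtain k where k: "i < k" "k \<le> lam b r" "same_block b r (block_low b r k) j" and bj: "Bi j"
      unfolding P_def by blast
    define l where "l = block_low b r k"
    have lL: "l \<in> nz_block_lows b r" unfolding l_def by (rule low_in[OF b2]) (use k i1 in auto)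
    have lm: "l < m" unfolding l_def m_def by (rule low_strict[OF b2 i1 k(1) k(2)])
    have mj: "m \<le> j" using bj unfolding Bi_def same_block_def by blast
    have sb: "\<forall>q\<in>{l..j}. dig b r q = dig b r l" "l = j \<or> dig b r l = 0 \<or> dig b r l = b - 1"
      using k(3) unfolding l_def[symmetric] same_block_def by blast+
    have "dig b r l \<noteq> 0" using lL by (simp add: nz_block_lows_def)
    hence dl: "dig b r l = b - 1" using sb(2) lm mj by auto
    have mm: "m-1 \<in> {l..j}" "m \<in> {l..j}" using lm mj by auto
    have "dig b r (m-1) = b-1" "dig b r m = b-1" using sb(1) dl mm by auto
    hence dd: "dig b r (m-1) = b-1" "dig b r m = b-1" .
    have "\<forall>q\<in>{m-1..m}. dig b r q = dig b r (m-1)"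
    proof
      fix q assume "q \<in> {m-1..m}"
      hence "q = m-1 \<or> q = m" by auto
      thus "dig b r q = dig b r (m-1)" using dd by auto
    qed
    moreover have "m - 1 \<le> m" by simp
    ultimately have "same_block b r (m-1) m" using dd unfolding same_block_def by blast
    moreover have "m \<noteq> 0" using lm by simp
    ultimately show False using mlow by simp
  qed
  have PP: "P (i-1) j \<longleftrightarrow> P i j \<or> Bi j" for j
  proof
    assume "P (i-1) j"
    then obtain k where k: "i-1 < k" "k \<le> lam b r" "same_block b r (block_low b r k) j" unfolding P_def by blast
    show "P i j \<or> Bi j"
    proof (cases "k = i")
      case True thus ?thesis using k by (simp add: Bi_def m_def)
    next
      case False
      have "P i j" unfolding P_def using k False by (intro exI[of _ k]) auto
      thus ?thesis by simp
    qed
  next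
    assume "P i j \<or> Bi j"
    thus "P (i-1) j"
    proof
      assume "P i j"
      then obtain k where k: "i < k" "k \<le> lam b r" "same_block b r (block_low b r k) j" unfolding P_def by blast
      show ?thesis unfolding P_def using k by (intro exI[of _ k]) auto
    next
      assume "Bi j" thus ?thesis unfolding P_def Bi_def m_def using i1 il by (intro exI[of _ i]) auto
    qed
  qed
  have rt: "rtrunc b r k = (\<Sum>j<nd. (if P k j then 0 else dig b r j) * b^j)" for k
    unfolding rtrunc_def P_def nd_def by simp
  define tsum where "tsum = (\<Sum>j<nd. (if Bi j then dig b r j else 0) * b^j)"
  have rt_eq: "rtrunc b r i = rtrunc b r (i-1) + tsum"
  proof -
    have "(if P i j then 0 else dig b r j) * b^j = (if P (i-1) j then 0 else dig b r j) * b^j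
          + (if Bi j then dig b r j else 0) * b^j" for j
      using F5[of j] PP[of j] by auto
    thus ?thesis unfolding rt tsum_def by (simp add: sum.distrib)
  qed
  hence teq: "rtrunc b r i - rtrunc b r (i-1) = tsum" by simp
  obtain M where mM: "m < M" and Mnd: "M \<le> nd" and Bchar: "\<And>j. Bi j \<longleftrightarrow> m \<le> j \<and> j < M"
    and shape: "(M = Suc m \<and> dig b r m < b) \<or> (\<forall>j. m \<le> j \<and> j < M \<longrightarrow> dig b r j = b-1)"
  proof (cases "dig b r m = b - 1")
    case False
    have "Bi j \<longleftrightarrow> m \<le> j \<and> j < Suc m" for j
    proof
      assume "Bi j"
      hence "m = j \<or> dig b r m = 0 \<or> dig b r m = b-1" "m \<le> j" unfolding Bi_def same_block_def by blast+
      thus "m \<le> j \<and> j < Suc m" using False dm0 by auto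
    next
      assume "m \<le> j \<and> j < Suc m"
      hence "j = m" by simp
      thus "Bi j" unfolding Bi_def using sb_refl by simp
    qed
    thus ?thesis using that[of "Suc m"] mnd dig_lt[OF b2] by auto
  next
    case True
    define M where "M = (LEAST j. m < j \<and> dig b r j \<noteq> b - 1)"
    have ex: "m < nd \<and> dig b r nd \<noteq> b - 1" using mnd dig_high[OF b2, of r nd] b2 by (simp add: nd_def)
    have MP: "m < M \<and> dig b r M \<noteq> b - 1" unfolding M_def by (rule LeastI[where P="\<lambda>j. m < j \<and> dig b r j \<noteq> b - 1", OF ex])
    have Mnd: "M \<le> nd" unfolding M_def by (rule Least_le[where P="\<lambda>j. m < j \<and> dig b r j \<noteq> b - 1", OF ex])
    have mid: "dig b r q = b - 1" if "m < q" "q < M" for q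
    proof -
      have "\<not> (m < q \<and> dig b r q \<noteq> b - 1)" using that(2) unfolding M_def by (rule not_less_Least)
      thus ?thesis using that by simp
    qed
    have run: "dig b r q = b - 1" if "m \<le> q" "q < M" for q
      using mid[of q] True that by (cases "m = q") auto
    have "Bi j \<longleftrightarrow> m \<le> j \<and> j < M" for j
    proof
      assume "Bi j"
      hence a: "m \<le> j" "\<forall>q\<in>{m..j}. dig b r q = dig b r m" unfolding Bi_def same_block_def by blast+
      show "m \<le> j \<and> j < M"
      proof (rule ccontr)
        assume "\<not> (m \<le> j \<and> j < M)"
        hence "M \<in> {m..j}" using a(1) MP by auto
        hence "dig b r M = dig b r m" using a(2) by blast
        thus False using MP True by simp
      qed
    next
      assume "m \<le> j \<and> j < M"
      hence mj: "m \<le> j" "j < M" by auto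
      have "\<forall>q\<in>{m..j}. dig b r q = dig b r m" using run True mj by auto
      thus "Bi j" unfolding Bi_def same_block_def using True mj(1) by blast
    qed
    thus ?thesis using that[of M] MP Mnd run by blast
  qed
  have tsum2: "tsum = (\<Sum>j\<in>{m..<M}. dig b r j * b^j)"
  proof -
    have "tsum = (\<Sum>j<nd. (if m \<le> j \<and> j < M then dig b r j * b^j else 0))"
      unfolding tsum_def Bchar by (intro sum.cong refl) simp
    also have "\<dots> = (\<Sum>j\<in>{j\<in>{..<nd}. m \<le> j \<and> j < M}. dig b r j * b^j)"
      by (rule sum.inter_filter[symmetric]) simp
    also have "{j\<in>{..<nd}. m \<le> j \<and> j < M} = {m..<M}" using Mnd by auto
    finally show ?thesis .
  qed
  have sdvd: "b^M dvd rtrunc b r (i-1)"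
    unfolding rt
  proof (rule dvd_sum)
    fix j assume "j \<in> {..<nd}"
    hence jnd: "j < nd" by simp
    show "b^M dvd (if P (i-1) j then 0 else dig b r j) * b^j"
    proof (cases "M \<le> j")
      case True
      hence "b^M dvd b^j" by (rule le_imp_power_dvd)
      thus ?thesis by simp
    next
      case False
      have "P (i-1) j" if dj: "dig b r j \<noteq> 0"
      proof (cases "m \<le> j")
        case True thus ?thesis using PP Bchar False by auto
      next
        case jm: False
        define l where "l = (LEAST l. same_block b r l j)"
        have slj: "same_block b r l j" unfolding l_def by (rule LeastI[of _ j]) (rule sb_refl)
        have lj: "l \<le> j" using slj unfolding same_block_def by blast
        have sl3: "\<forall>q\<in>{l..j}. dig b r q = dig b r l" using slj unfolding same_block_def by blast
        have "j \<in> {l..j}" using lj by simp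
        hence "dig b r j = dig b r l" using sl3 by blast
        hence dl: "dig b r l = dig b r j" by simp
        have lL: "l \<in> nz_block_lows b r"
        proof -
          have "\<not> same_block b r (l-1) l" if "l \<noteq> 0"
          proof
            assume s1: "same_block b r (l-1) l"
            have s1a: "\<forall>q\<in>{l-1..l}. dig b r q = dig b r (l-1)" using s1 unfolding same_block_def by blast
            have "l \<in> {l-1..l}" by simp
            hence d1: "dig b r l = dig b r (l-1)" using s1a by blast
            have "l - 1 = l \<or> dig b r (l-1) = 0 \<or> dig b r (l-1) = b-1" using s1 unfolding same_block_def by blast
            moreover have "l - 1 \<noteq> l" using that by simp
            ultimately have d2: "dig b r (l-1) = 0 \<or> dig b r (l-1) = b-1" by blast
            have d3: "\<forall>q\<in>{l..j}. dig b r q = dig b r l" by (rule sl3)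
            have d4: "\<forall>q\<in>{l-1..j}. dig b r q = dig b r (l-1)"
            proof
              fix q assume q: "q \<in> {l-1..j}"
              show "dig b r q = dig b r (l-1)"
              proof (cases "q = l - 1")
                case False
                hence "q \<in> {l..j}" using q that by auto
                thus ?thesis using d3 d1 by simp
              qed simp
            qed
            have "l - 1 \<le> j" using lj by simp
            hence "same_block b r (l-1) j" unfolding same_block_def using d2 d4 by blast
            hence "l \<le> l - 1" unfolding l_def by (rule Least_le)
            thus False using that by simp
          qed
          thus ?thesis using lj jm mnd dj dl by (auto simp: nz_block_lows_def nd_def)
        qed
        obtain k where k: "1 \<le> k" "k \<le> lam b r" "block_low b r k = l" using low_surj[OF b2 lL] by blast
        have "i < k" by (rule low_order[OF b2 k(1) k(2) i1 il]) (use k(3) lj jm in \<open>simp add: m_def\<close>)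
        hence "P i j" unfolding P_def using k slj by blast
        thus ?thesis using PP by simp
      qed
      thus ?thesis by (cases "dig b r j = 0") simp_all
    qed
  qed
  show ?thesis
  proof (cases "M = Suc m \<and> dig b r m < b")
    case True
    hence tv: "tsum = dig b r m * b^m" using tsum2 by simp
    have "dig b r m * b^m < b * b^m" using True bpos[OF b2] by simp
    thus ?thesis using True tv teq sdvd by (intro exI[of _ m] exI[of _ M]) auto
  next
    case False
    hence run: "\<forall>j. m \<le> j \<and> j < M \<longrightarrow> dig b r j = b-1" using shape by blast
    have tv: "tsum = (\<Sum>j\<in>{m..<M}. (b-1) * b^j)" unfolding tsum2 by (rule sum.cong) (use run in auto)
    have g: "tsum + b^m = b^M" using geo2[of m M] mM tv by simp
    have "b^m dvd tsum" unfolding tv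
      by (rule dvd_sum) (auto intro: dvd_mult le_imp_power_dvd)
    moreover have "tsum < b^M" using g bpos[OF b2] by (metis less_add_same_cancel1 zero_less_power)
    ultimately show ?thesis using g teq sdvd mM by (intro exI[of _ m] exI[of _ M]) auto
  qed
qed

end

context fixes b :: nat assumes b2: "2 \<le> b" begin

lemma pmf_ne: "{..<b} \<noteq> {}" "finite {..<b}"
proof -
  have "0 \<in> {..<b}" using b2 by simp
  thus "{..<b} \<noteq> {}" by blast
qed simp

lemma haar_prob: "prob_space (haar b)"
  unfolding haar_def by (rule prob_space_PiM) (rule measure_pmf.prob_space_axioms)

lemma space_haar: "space (haar b) = UNIV"
  unfolding haar_def by (simp add: space_PiM)

lemma AE_digits: "AE x in haar b. \<forall>j. x j < b"
proof -
  have "AE x in haar b. x j < b" for j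
    unfolding haar_def
    by (rule AE_PiM_component) (auto simp: AE_measure_pmf_iff set_pmf_of_set[OF pmf_ne] intro: measure_pmf.prob_space_axioms)
  thus ?thesis by (simp add: AE_all_countable)
qed

lemma cyl_sets: "{x. \<forall>j<n. x (a+j) = v j} \<in> sets (haar b)"
proof -
  have "{x. \<forall>j<n. x (a+j) = v j} = (\<Inter>j<n. {x \<in> space (haar b). x (a+j) = v j}) \<inter> space (haar b)"
    by (auto simp: space_haar)
  also have "\<dots> \<in> sets (haar b)" unfolding haar_def
    by measurable
  finally show ?thesis .
qed

lemma cyl_measure: "emeasure (haar b) {x. \<forall>j<n. x (a+j) = v j} \<le> ennreal ((1 / real b) ^ n)"
proof -
  interpret product_prob_space "\<lambda>_::nat. measure_pmf (pmf_of_set {..<b})" UNIV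
    by unfold_locales
  define J where "J = (\<lambda>j. a+j) ` {..<n}"
  define X where "X i = {v (i - a)}" for i
  have eq: "{x. \<forall>j<n. x (a+j) = v j} = {x\<in>space (haar b). \<forall>i\<in>J. x i \<in> X i}"
    by (auto simp: space_haar J_def X_def)
  have "emeasure (haar b) {x\<in>space (haar b). \<forall>i\<in>J. x i \<in> X i}
       = (\<Prod>i\<in>J. emeasure (measure_pmf (pmf_of_set {..<b})) (X i))"
    unfolding haar_def by (rule emeasure_PiM_Collect) (auto simp: J_def)
  also have "\<dots> = (\<Prod>i\<in>J. ennreal (pmf (pmf_of_set {..<b}) (v (i - a))))"
    by (simp add: X_def emeasure_pmf_single)
  also have "\<dots> = ennreal (\<Prod>i\<in>J. pmf (pmf_of_set {..<b}) (v (i - a)))"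
    by (rule prod_ennreal) simp
  also have "\<dots> \<le> ennreal (\<Prod>i\<in>J. 1 / real b)"
    by (intro ennreal_leI prod_mono) (auto simp: pmf_of_set[OF pmf_ne] indicator_def)
  also have "(\<Prod>i\<in>J. 1 / real b) = (1 / real b) ^ n"
    by (simp add: J_def card_image)
  finally show ?thesis using eq by simp
qed

end

context fixes b :: nat assumes b2: "2 \<le> b" begin

lemma Xs_shift: "Xs b x (M0 + Suc n) = Xs b x M0 + b^(Suc M0) * Xs b (\<lambda>l. x (Suc M0 + l)) n"
proof (induction n)
  case 0 thus ?case by (simp add: Xs_def)
next
  case (Suc n)
  have "Xs b x (M0 + Suc (Suc n)) = Xs b x (M0 + Suc n) + x (Suc M0 + Suc n) * b^(Suc M0 + Suc n)"
    using Xs_Suc[OF b2, of x "M0 + Suc n"] by simp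
  also have "\<dots> = Xs b x M0 + b^(Suc M0) * (Xs b (\<lambda>l. x (Suc M0 + l)) n + x (Suc M0 + Suc n) * b^Suc n)"
    unfolding Suc power_add by (simp add: algebra_simps)
  also have "Xs b (\<lambda>l. x (Suc M0 + l)) n + x (Suc M0 + Suc n) * b^Suc n = Xs b (\<lambda>l. x (Suc M0 + l)) (Suc n)"
    using Xs_Suc[OF b2, of "\<lambda>l. x (Suc M0 + l)" n] by simp
  finally show ?case .
qed

lemma Bincl:
  assumes x: "\<And>j. x j < b" and hs: "b^M dvd s" and M1: "1 \<le> M"
    and yb: "\<forall>i<n. badd b x s (M+i) = b-1"
  shows "\<forall>j<n. x (M+j) = dig b (b^n - 1 - (s div b^M) mod b^n) j"
proof (cases n)
  case 0 thus ?thesis by simp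
next
  case (Suc n')
  obtain M0 where M0: "M = Suc M0" using M1 by (cases M) auto
  define x' where "x' l = x (M + l)" for l
  define X' where "X' = Xs b x' n'"
  define s' where "s' = s div b^M"
  have s: "s = b^M * s'" using hs by (simp add: s'_def)
  have x': "\<And>l. x' l < b" using x by (simp add: x'_def)
  have xf: "x' = (\<lambda>l. x (Suc M0 + l))" by (rule ext) (simp add: x'_def M0)
  have XK: "Xs b x (M0 + n) = Xs b x M0 + b^M * X'"
    unfolding X'_def xf Suc M0 by (rule Xs_shift)
  have lt0: "Xs b x M0 < b^M" using Xs_lt[OF b2, of x M0] x M0 by simp
  have yi: "badd b x s (M+i) = (X' + s') div b^i mod b" if "i < n" for i
  proof -
    have "badd b x s (M+i) = (Xs b x (M0+n) + s) div b^(M+i) mod b"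
      by (rule badd_eq[OF b2]) (use that M0 in simp)
    also have "Xs b x (M0+n) + s = Xs b x M0 + b^M * (X' + s')" unfolding XK s by (simp add: algebra_simps)
    also have "(Xs b x M0 + b^M * (X' + s')) div b^(M+i) = ((Xs b x M0 + b^M * (X' + s')) div b^M) div b^i"
      by (simp add: power_add div_mult2_eq)
    also have "(Xs b x M0 + b^M * (X' + s')) div b^M = X' + s'"
      using lt0 bpos[OF b2] by simp
    finally show ?thesis .
  qed
  have "(X' + s') mod b^n = (\<Sum>i<n. ((X' + s') div b^i mod b) * b^i)" by (rule digits_sum[OF b2, symmetric])
  also have "\<dots> = (\<Sum>i<n. (b-1) * b^i)" by (rule sum.cong) (use yi yb in auto)
  finally have modv: "(X' + s') mod b^n = b^n - 1" using geo_sum[OF b2, of n] by simp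
  have X'lt: "X' < b^n" unfolding X'_def using Xs_lt[OF b2, of x' n'] x' Suc by simp
  define u where "u = s' mod b^n"
  have ult: "u < b^n" unfolding u_def using b2 by simp
  have "(X' + u) mod b^n = b^n - 1" using modv by (simp add: u_def mod_add_right_eq)
  hence X'eq: "X' = b^n - 1 - u"
  proof -
    assume h: "(X' + u) mod b^n = b^n - 1"
    show ?thesis
    proof (cases "X' + u < b^n")
      case True thus ?thesis using h by simp
    next
      case False
      hence "(X' + u) mod b^n = X' + u - b^n" using X'lt ult by (simp add: le_mod_geq)
      thus ?thesis using h X'lt ult False by simp
    qed
  qed
  show ?thesis
  proof (intro allI impI)
    fix j assume jn: "j < n"
    have "dig b (b^n - 1 - (s div b^M) mod b^n) j = X' div b^j mod b"
      by (simp add: dig_def X'eq u_def s'_def)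
    also have "\<dots> = x' j"
    proof -
      have jn': "j \<le> n'" using jn Suc by simp
      obtain c where c: "Xs b x' n' = Xs b x' j + b^(j+1) * c" using Xs_split[OF b2 jn'] by blast
      have "X' div b^j mod b = Xs b x' j div b^j mod b" unfolding X'_def c by (rule dm_add_dvd[OF b2]) simp
      also have "\<dots> = x' j" by (rule Xs_digit[OF b2 x'])
      finally show ?thesis .
    qed
    finally show "x (M+j) = dig b (b^n - 1 - (s div b^M) mod b^n) j" by (simp add: x'_def)
  qed
qed

end

lemma summ_poly_geo:
  assumes b2: "2 \<le> (b::nat)"
  shows "summable (\<lambda>n. real (Suc n) ^ k * (1 / real b) ^ n)"
proof -
  have lim: "(\<lambda>n::nat. (real n + 1) ^ k * (3/4) ^ n) \<longlonglongrightarrow> 0" by real_asymp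
  then obtain B where B: "\<And>n. norm ((real n + 1) ^ k * (3/4) ^ n) \<le> B"
    using convergent_imp_Bseq[OF convergentI[OF lim]] unfolding Bseq_def by auto
  show ?thesis
  proof (rule summable_comparison_test[where g="\<lambda>n. B * (2/3)^n"])
    show "summable (\<lambda>n. B * (2/3::real)^n)" by (intro summable_mult summable_geometric) simp
    show "\<exists>N. \<forall>n\<ge>N. norm (real (Suc n) ^ k * (1 / real b) ^ n) \<le> B * (2 / 3) ^ n"
    proof (intro exI allI impI)
      fix n :: nat
      have "(1 / real b) ^ n \<le> (1/2) ^ n" using b2 by (intro power_mono) (auto simp: field_simps)
      hence "real (Suc n) ^ k * (1 / real b) ^ n \<le> real (Suc n) ^ k * (1/2)^n" by (intro mult_left_mono) auto
      also have "\<dots> = ((real n + 1) ^ k * (3/4) ^ n) * (2/3)^n" by (simp add: power_mult_distrib[symmetric] add.commute)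
      also have "\<dots> \<le> B * (2/3)^n" using B[of n] by (intro mult_right_mono) auto
      finally show "norm (real (Suc n) ^ k * (1 / real b) ^ n) \<le> B * (2 / 3) ^ n" by simp
    qed
  qed
qed

lemma pow_sum_le:
  fixes a c :: real assumes a: "0 \<le> a" and c: "0 \<le> c"
  shows "(a + c)^k \<le> 2^k * (a^k + c^k)"
proof -
  have "(a+c)^k \<le> (2 * max a c)^k" by (rule power_mono) (use a c in auto)
  also have "\<dots> = 2^k * (max a c)^k" by (simp add: power_mult_distrib)
  also have "(max a c)^k \<le> a^k + c^k" using a c by (cases "a \<le> c") (auto simp: max_def)
  hence "2^k * (max a c)^k \<le> 2^k * (a^k + c^k)" by (intro mult_left_mono) auto
  finally show ?thesis .
qed

lemma term_le_suminf: "(f :: nat \<Rightarrow> ennreal) n \<le> suminf f"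
proof -
  have "sum f {n} \<le> suminf f" by (rule sum_le_suminf) (auto intro: summableI)
  thus ?thesis by simp
qed

lemma suminf_pow_top: "(\<Sum>n. ennreal (real (Suc n) ^ k)) = \<top>"
proof (rule summable_iff_suminf_neq_top)
  show "\<And>n. 0 \<le> real (Suc n) ^ k" by simp
  show "\<not> summable (\<lambda>n. real (Suc n) ^ k)"
  proof
    assume "summable (\<lambda>n. real (Suc n) ^ k)"
    hence "(\<lambda>n. real (Suc n) ^ k) \<longlonglongrightarrow> 0" by (rule summable_LIMSEQ_zero)
    moreover have "\<forall>n. 1 \<le> real (Suc n) ^ k" by (simp add: one_le_power)
    ultimately have "1 \<le> (0::real)" by (intro LIMSEQ_le_const) auto
    thus False by simp
  qed
qed

lemma ptw_gen:
  assumes b2: "2 \<le> b" and x: "\<And>j. x j < b" and hs: "b^M dvd s" and mM: "m < M"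
    and blk: "M = Suc m \<or> t + b^m = b^M" and tdvd: "b^m dvd t" and tlt: "t < b^M"
  shows "ennreal (\<bar>Delta b t (badd b x s)\<bar> ^ k) \<le> ennreal ((real (b-1))^k * 2^k) *
    ((\<Sum>n. ennreal (real (Suc n) ^ k) * indicator {x. \<forall>j<n. x (m+j) = 0} x)
   + (\<Sum>n. ennreal (real (Suc n) ^ k) * indicator {x. \<forall>j<n. x (M+j) = dig b (b^n - 1 - (s div b^M) mod b^n) j} x))"
    (is "_ \<le> ennreal ?c * (?SA + ?SB)")
proof -
  obtain Z where ZZ: "(\<forall>i<Z. x (m+i) = 0) \<and> (\<forall>R. (\<forall>i<R. badd b x s (M+i) = b-1) \<longrightarrow> badd b x s (M+R) \<noteq> b-1
      \<longrightarrow> \<bar>Delta b t (badd b x s)\<bar> \<le> real ((b-1)*(Z+R+2)))"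
    using pointwise[OF b2 x hs mM blk tdvd tlt] ..
  note Z0 = conjunct1[OF ZZ] and ZB = conjunct2[OF ZZ]
  have M1: "1 \<le> M" using mM by simp
  have c0: "0 < ?c" using b2 by simp
  have SAge: "ennreal (real (Suc Z) ^ k) \<le> ?SA"
  proof -
    have "x \<in> {x. \<forall>j<Z. x (m+j) = 0}" using Z0 by simp
    hence "ennreal (real (Suc Z) ^ k) = ennreal (real (Suc Z) ^ k) * indicator {x. \<forall>j<Z. x (m+j) = 0} x" by simp
    also have "\<dots> \<le> ?SA" by (rule term_le_suminf[where f="\<lambda>n. ennreal (real (Suc n) ^ k) * indicator {x. \<forall>j<n. x (m+j) = 0} x"])
    finally show ?thesis .
  qed
  have inB: "x \<in> {x. \<forall>j<n. x (M+j) = dig b (b^n - 1 - (s div b^M) mod b^n) j}"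
    if "\<forall>i<n. badd b x s (M+i) = b-1" for n
    using Bincl[OF b2 x hs M1 that] by simp
  show ?thesis
  proof (cases "\<exists>R. badd b x s (M+R) \<noteq> b-1")
    case True
    define R where "R = (LEAST R. badd b x s (M+R) \<noteq> b-1)"
    have RP: "badd b x s (M+R) \<noteq> b-1" unfolding R_def by (rule LeastI_ex[OF True])
    have Rlt: "\<forall>i<R. badd b x s (M+i) = b-1"
    proof (intro allI impI)
      fix i assume "i < R"
      hence "\<not> badd b x s (M+i) \<noteq> b-1" unfolding R_def by (rule not_less_Least)
      thus "badd b x s (M+i) = b-1" by simp
    qed
    have bd: "\<bar>Delta b t (badd b x s)\<bar> \<le> real ((b-1)*(Z+R+2))" using ZB Rlt RP by blast
    have SBge: "ennreal (real (Suc R) ^ k) \<le> ?SB"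
    proof -
      have "ennreal (real (Suc R) ^ k) = ennreal (real (Suc R) ^ k) * indicator {x. \<forall>j<R. x (M+j) = dig b (b^R - 1 - (s div b^M) mod b^R) j} x"
        using inB[OF Rlt] by simp
      also have "\<dots> \<le> ?SB" by (rule term_le_suminf[where f="\<lambda>n. ennreal (real (Suc n) ^ k) * indicator {x. \<forall>j<n. x (M+j) = dig b (b^n - 1 - (s div b^M) mod b^n) j} x"])
      finally show ?thesis .
    qed
    have "\<bar>Delta b t (badd b x s)\<bar> ^ k \<le> (real ((b-1)*(Z+R+2))) ^ k"
      by (rule power_mono[OF bd]) simp
    also have "real ((b-1)*(Z+R+2)) = real (b-1) * (real (Suc Z) + real (Suc R))"
    proof -
      have "(b-1)*(Z+R+2) = (b-1)*(Suc Z + Suc R)" by simp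
      thus ?thesis by (simp only: of_nat_mult of_nat_add)
    qed
    also have "(real (b-1) * (real (Suc Z) + real (Suc R))) ^ k = real (b-1)^k * (real (Suc Z) + real (Suc R)) ^ k"
      by (simp add: power_mult_distrib)
    also have "\<dots> \<le> real (b-1)^k * (2^k * (real (Suc Z) ^ k + real (Suc R) ^ k))"
      by (intro mult_left_mono pow_sum_le) auto
    also have "\<dots> = ?c * (real (Suc Z) ^ k + real (Suc R) ^ k)" by simp
    finally have rb: "\<bar>Delta b t (badd b x s)\<bar> ^ k \<le> ?c * (real (Suc Z) ^ k + real (Suc R) ^ k)" .
    have "ennreal (\<bar>Delta b t (badd b x s)\<bar> ^ k) \<le> ennreal (?c * (real (Suc Z) ^ k + real (Suc R) ^ k))"
      by (rule ennreal_leI[OF rb])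
    also have "\<dots> = ennreal ?c * (ennreal (real (Suc Z) ^ k) + ennreal (real (Suc R) ^ k))"
      using c0 by (simp add: ennreal_mult ennreal_plus)
    also have "\<dots> \<le> ennreal ?c * (?SA + ?SB)"
      by (intro mult_left_mono add_mono SAge SBge) auto
    finally show ?thesis .
  next
    case False
    hence "\<forall>n. \<forall>i<n. badd b x s (M+i) = b-1" by auto
    hence "\<And>n. x \<in> {x. \<forall>j<n. x (M+j) = dig b (b^n - 1 - (s div b^M) mod b^n) j}" using inB by blast
    hence "?SB = (\<Sum>n. ennreal (real (Suc n) ^ k))" by simp
    hence "?SB = \<top>" using suminf_pow_top by simp
    hence "ennreal ?c * (?SA + ?SB) = \<top>" using c0 b2 by (simp add: ennreal_mult_top)
    thus ?thesis by simp
  qed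
qed


theorem mainTheorem17:
  fixes b :: nat
  assumes "b \<ge> 2"
  shows "\<forall>k::nat. \<exists>C::real. C > 0 \<and> (\<forall>r::nat. \<forall>i::nat. 1 \<le> r \<longrightarrow> 1 \<le> i \<longrightarrow> i \<le> lam b r \<longrightarrow>
           (\<integral>\<^sup>+ x. ennreal (\<bar>Xr b r i x\<bar> ^ k) \<partial>haar b) \<le> ennreal C)"
proof
  fix k :: nat
  have b2: "2 \<le> b" using assms by simp
  define S where "S = (\<Sum>n. real (Suc n) ^ k * (1 / real b) ^ n)"
  have summ: "summable (\<lambda>n. real (Suc n) ^ k * (1 / real b) ^ n)" by (rule summ_poly_geo[OF b2])
  have S0: "0 \<le> S" unfolding S_def by (rule suminf_nonneg[OF summ]) simp
  define c where "c = (real (b-1))^k * 2^k"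
  have c0: "0 \<le> c" unfolding c_def by simp
  show "\<exists>C::real. C > 0 \<and> (\<forall>r::nat. \<forall>i::nat. 1 \<le> r \<longrightarrow> 1 \<le> i \<longrightarrow> i \<le> lam b r \<longrightarrow>
           (\<integral>\<^sup>+ x. ennreal (\<bar>Xr b r i x\<bar> ^ k) \<partial>haar b) \<le> ennreal C)"
  proof (intro exI[of _ "2 * c * S + 1"] conjI allI impI)
    have "0 \<le> 2 * c * S" using c0 S0 by (intro mult_nonneg_nonneg) auto
    thus "0 < 2 * c * S + 1" by linarith
    fix r i :: nat assume r1: "1 \<le> r" and i1: "1 \<le> i" and il: "i \<le> lam b r"
    define s where "s = rtrunc b r (i-1)"
    define t where "t = rtrunc b r i - rtrunc b r (i-1)"
    have ex: "\<exists>m M. m < M \<and> b^M dvd s \<and> b^m dvd t \<and> t < b^M \<and> (M = Suc m \<or> t + b^m = b^M)"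
      unfolding s_def t_def by (rule block_struct[OF b2 i1 il])
    then obtain m where "\<exists>M. m < M \<and> b^M dvd s \<and> b^m dvd t \<and> t < b^M \<and> (M = Suc m \<or> t + b^m = b^M)" ..
    then obtain M where H: "m < M \<and> b^M dvd s \<and> b^m dvd t \<and> t < b^M \<and> (M = Suc m \<or> t + b^m = b^M)" ..
    have mM: "m < M" and hs: "b^M dvd s" and tdvd: "b^m dvd t" and tlt: "t < b^M"
      and blk: "M = Suc m \<or> t + b^m = b^M" using H by simp_all
    define A where "A n = {x::nat\<Rightarrow>nat. \<forall>j<n. x (m+j) = 0}" for n
    define B where "B n = {x::nat\<Rightarrow>nat. \<forall>j<n. x (M+j) = dig b (b^n - 1 - (s div b^M) mod b^n) j}" for n
    have Ameas[measurable]: "A n \<in> sets (haar b)" for n unfolding A_def by (rule cyl_sets[OF b2])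
    have Bmeas[measurable]: "B n \<in> sets (haar b)" for n unfolding B_def by (rule cyl_sets[OF b2])
    have Am: "emeasure (haar b) (A n) \<le> ennreal ((1 / real b) ^ n)" for n unfolding A_def by (rule cyl_measure[OF b2])
    have Bm: "emeasure (haar b) (B n) \<le> ennreal ((1 / real b) ^ n)" for n unfolding B_def by (rule cyl_measure[OF b2])
    define SA where "SA x = (\<Sum>n. ennreal (real (Suc n) ^ k) * indicator (A n) x)" for x
    define SB where "SB x = (\<Sum>n. ennreal (real (Suc n) ^ k) * indicator (B n) x)" for x
    have AEb: "AE x in haar b. ennreal (\<bar>Xr b r i x\<bar> ^ k) \<le> ennreal c * (SA x + SB x)"
    proof (rule eventually_mono[OF AE_digits[OF b2]])
      fix x :: "nat \<Rightarrow> nat" assume x: "\<forall>j. x j < b"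
      have "Xr b r i x = Delta b t (badd b x s)"
        unfolding Xr_def s_def t_def using Todo_pow[OF b2, of x] x by simp
      thus "ennreal (\<bar>Xr b r i x\<bar> ^ k) \<le> ennreal c * (SA x + SB x)"
        using ptw_gen[OF b2 _ hs mM blk tdvd tlt, of x k] x
        unfolding SA_def SB_def A_def B_def c_def by simp
    qed
    have SAm[measurable]: "SA \<in> borel_measurable (haar b)" unfolding SA_def by measurable
    have SBm[measurable]: "SB \<in> borel_measurable (haar b)" unfolding SB_def by measurable
    have intA: "(\<integral>\<^sup>+ x. SA x \<partial>haar b) \<le> ennreal S"
    proof -
      have "(\<integral>\<^sup>+ x. SA x \<partial>haar b) = (\<Sum>n. \<integral>\<^sup>+ x. ennreal (real (Suc n) ^ k) * indicator (A n) x \<partial>haar b)"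
        unfolding SA_def by (rule nn_integral_suminf) measurable
      also have "\<dots> = (\<Sum>n. ennreal (real (Suc n) ^ k) * emeasure (haar b) (A n))"
        by (intro suminf_cong nn_integral_cmult_indicator Ameas)
      also have "\<dots> \<le> (\<Sum>n. ennreal (real (Suc n) ^ k * (1 / real b) ^ n))"
      proof (rule suminf_le)
        fix n
        have "ennreal (real (Suc n) ^ k) * emeasure (haar b) (A n) \<le> ennreal (real (Suc n) ^ k) * ennreal ((1 / real b) ^ n)"
          by (intro mult_left_mono Am) simp
        thus "ennreal (real (Suc n) ^ k) * emeasure (haar b) (A n) \<le> ennreal (real (Suc n) ^ k * (1 / real b) ^ n)"
          by (simp add: ennreal_mult)
      qed (auto intro: summableI)
      also have "\<dots> = ennreal S" unfolding S_def by (rule suminf_ennreal2[OF _ summ]) simp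
      finally show ?thesis .
    qed
    have intB: "(\<integral>\<^sup>+ x. SB x \<partial>haar b) \<le> ennreal S"
    proof -
      have "(\<integral>\<^sup>+ x. SB x \<partial>haar b) = (\<Sum>n. \<integral>\<^sup>+ x. ennreal (real (Suc n) ^ k) * indicator (B n) x \<partial>haar b)"
        unfolding SB_def by (rule nn_integral_suminf) measurable
      also have "\<dots> = (\<Sum>n. ennreal (real (Suc n) ^ k) * emeasure (haar b) (B n))"
        by (intro suminf_cong nn_integral_cmult_indicator Bmeas)
      also have "\<dots> \<le> (\<Sum>n. ennreal (real (Suc n) ^ k * (1 / real b) ^ n))"
      proof (rule suminf_le)
        fix n
        have "ennreal (real (Suc n) ^ k) * emeasure (haar b) (B n) \<le> ennreal (real (Suc n) ^ k) * ennreal ((1 / real b) ^ n)"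
          by (intro mult_left_mono Bm) simp
        thus "ennreal (real (Suc n) ^ k) * emeasure (haar b) (B n) \<le> ennreal (real (Suc n) ^ k * (1 / real b) ^ n)"
          by (simp add: ennreal_mult)
      qed (auto intro: summableI)
      also have "\<dots> = ennreal S" unfolding S_def by (rule suminf_ennreal2[OF _ summ]) simp
      finally show ?thesis .
    qed
    have "(\<integral>\<^sup>+ x. ennreal (\<bar>Xr b r i x\<bar> ^ k) \<partial>haar b) \<le> (\<integral>\<^sup>+ x. ennreal c * (SA x + SB x) \<partial>haar b)"
      by (rule nn_integral_mono_AE[OF AEb])
    also have "\<dots> = ennreal c * ((\<integral>\<^sup>+ x. SA x \<partial>haar b) + (\<integral>\<^sup>+ x. SB x \<partial>haar b))"
      by (simp add: nn_integral_cmult nn_integral_add)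
    also have "\<dots> \<le> ennreal c * (ennreal S + ennreal S)"
      by (intro mult_left_mono add_mono intA intB) simp
    also have "\<dots> = ennreal (2 * c * S)" using c0 S0 by (simp add: ennreal_mult[symmetric] ennreal_plus[symmetric] algebra_simps)
    also have "\<dots> \<le> ennreal (2 * c * S + 1)" by (rule ennreal_leI) simp
    finally show "(\<integral>\<^sup>+ x. ennreal (\<bar>Xr b r i x\<bar> ^ k) \<partial>haar b) \<le> ennreal (2 * c * S + 1)" .
  qed
qed

end
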